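(* Let $\sigma$ be a two-qubit state that is diagonal in the Bell basis $\{|\Phi^+\rangle,|\Phi^-\rangle,|\Psi^+\rangle,|\Psi^-\rangle\}$, with systems $\hat A_i$ (first qubit) and $\hat B_i$ (second qubit). Suppose there are qubit observables $A_0,A_1,B_0,B_1$ of the form $\vec v\cdot\vec\sigma$ with unit vectors $\vec v\in\mathbb{R}^3$ such that the CHSH winning probability $\omega=\frac12+\frac18\mathrm{Tr}\big[\sigma(A_0\otimes B_0+A_0\otimes B_1+A_1\otimes B_0-A_1\otimes B_1)\big]$ lies in $\left[\frac34,\frac{2+\sqrt2}{4}\right]$. Then $$H(\hat A_i|\hat B_i)_\sigma\le 2h\left(\frac12-\frac{2\omega-1}{\sqrt2}\right)-1.$$
   Context: $H(\hat A_i|\hat B_i)_\sigma=H(\sigma_{\hat A_i\hat B_i})-H(\sigma_{\hat B_i})$ is the conditional von Neumann entropy; $h(p)=-p\log p-(1-p)\log(1-p)$ is the binary entropy, logarithms base 2. $|\Phi^\pm\rangle=(|00\rangle\pm|11\rangle)/\sqrt2$, $|\Psi^\pm\rangle=(|01\rangle\pm|10\rangle)/\sqrt2$; $\vec\sigma=(\sigma_x,\sigma_y,\sigma_z)$ are the Pauli matrices. The CHSH value $\beta$ and winning probability are related by $\omega=\frac12+\frac\beta8$. *)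

theory Defs
  imports Complex_Main "Jordan_Normal_Form.Char_Poly"
begin

definition ent_term :: "real \<Rightarrow> real" where
  "ent_term x = (if x \<le> 0 then 0 else - x * log 2 x)"

definition bin_entropy :: "real \<Rightarrow> real" where
  "bin_entropy p = ent_term p + ent_term (1 - p)"

definition pauli_x :: "complex mat" where
  "pauli_x = mat_of_rows_list 2 [[0, 1], [1, 0]]"
definition pauli_y :: "complex mat" where
  "pauli_y = mat_of_rows_list 2 [[0, -\<i>], [\<i>, 0]]"
definition pauli_z :: "complex mat" where
  "pauli_z = mat_of_rows_list 2 [[1, 0], [0, -1]]"

definition qubit_obs :: "real \<Rightarrow> real \<Rightarrow> real \<Rightarrow> complex mat" where
  "qubit_obs v1 v2 v3 = complex_of_real v1 \<cdot>\<^sub>m pauli_x + complex_of_real v2 \<cdot>\<^sub>m pauli_y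
                         + complex_of_real v3 \<cdot>\<^sub>m pauli_z"

(* Kronecker product of two 2x2 matrices; basis index of |a b> is 2*a + b *)
definition kron2 :: "complex mat \<Rightarrow> complex mat \<Rightarrow> complex mat" where
  "kron2 A B = mat 4 4 (\<lambda>(i, j). A $$ (i div 2, j div 2) * B $$ (i mod 2, j mod 2))"

definition mtrace :: "complex mat \<Rightarrow> complex" where
  "mtrace M = (\<Sum>i<dim_row M. M $$ (i, i))"

definition ptrace_A :: "complex mat \<Rightarrow> complex mat" where
  "ptrace_A M = mat 2 2 (\<lambda>(i, j). M $$ (i, j) + M $$ (2 + i, 2 + j))"

(* Bell states in the computational basis |00>,|01>,|10>,|11> *)
definition bell_phi_plus :: "complex vec" where
  "bell_phi_plus = vec_of_list [1 / sqrt 2, 0, 0, 1 / sqrt 2]"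
definition bell_phi_minus :: "complex vec" where
  "bell_phi_minus = vec_of_list [1 / sqrt 2, 0, 0, - 1 / sqrt 2]"
definition bell_psi_plus :: "complex vec" where
  "bell_psi_plus = vec_of_list [0, 1 / sqrt 2, 1 / sqrt 2, 0]"
definition bell_psi_minus :: "complex vec" where
  "bell_psi_minus = vec_of_list [0, 1 / sqrt 2, - 1 / sqrt 2, 0]"

definition proj :: "complex vec \<Rightarrow> complex mat" where
  "proj v = mat (dim_vec v) (dim_vec v) (\<lambda>(i, j). v $ i * cnj (v $ j))"

definition bell_diag :: "real \<Rightarrow> real \<Rightarrow> real \<Rightarrow> real \<Rightarrow> complex mat" where
  "bell_diag p1 p2 p3 p4 =
     complex_of_real p1 \<cdot>\<^sub>m proj bell_phi_plus + complex_of_real p2 \<cdot>\<^sub>m proj bell_phi_minus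
   + complex_of_real p3 \<cdot>\<^sub>m proj bell_psi_plus + complex_of_real p4 \<cdot>\<^sub>m proj bell_psi_minus"

(* von Neumann entropy (base 2): - sum over eigenvalues (with algebraic multiplicity,
   i.e. roots of the characteristic polynomial) of lambda log lambda *)
definition vn_entropy :: "complex mat \<Rightarrow> real" where
  "vn_entropy M = (\<Sum>z\<in>{z. poly (char_poly M) z = 0}.
                     real (order z (char_poly M)) * ent_term (Re z))"

definition cond_entropy :: "complex mat \<Rightarrow> real" where
  "cond_entropy M = vn_entropy M - vn_entropy (ptrace_A M)"

definition chsh_omega :: "complex mat \<Rightarrow> complex mat \<Rightarrow> complex mat \<Rightarrow> complex mat \<Rightarrow> complex mat \<Rightarrow> real" where
  "chsh_omega \<rho> A0 A1 B0 B1 = 1/2 + Re (mtrace (\<rho> * (kron2 A0 B0 + kron2 A0 B1 + kron2 A1 B0 - kron2 A1 B1))) / 8"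

end

theory Submission
  imports Defs "HOL-Real_Asymp.Real_Asymp"
begin

lemma less4: "(i::nat) < 4 \<Longrightarrow> i = 0 \<or> i = 1 \<or> i = 2 \<or> i = 3" by auto
lemma less2: "(i::nat) < 2 \<Longrightarrow> i = 0 \<or> i = 1" by auto
lemma cs2: "complex_of_real (sqrt 2) * complex_of_real (sqrt 2) = 2"
  by (simp flip: of_real_mult)
lemma sum4': "(\<Sum>i\<in>{0..<(4::nat)}. f i) = f 0 + f 1 + f 2 + (f 3 :: 'a :: comm_monoid_add)"
  by (simp add: eval_nat_numeral ac_simps atLeast0LessThan)

lemma mrl_carrier: "length rs = n \<Longrightarrow> mat_of_rows_list m rs \<in> carrier_mat n m"
  by (auto simp: mat_of_rows_list_def)

lemma bell_diag_explicit: "bell_diag p1 p2 p3 p4 = mat_of_rows_list 4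
  [[complex_of_real ((p1+p2)/2), 0, 0, complex_of_real ((p1-p2)/2)],
   [0, complex_of_real ((p3+p4)/2), complex_of_real ((p3-p4)/2), 0],
   [0, complex_of_real ((p3-p4)/2), complex_of_real ((p3+p4)/2), 0],
   [complex_of_real ((p1-p2)/2), 0, 0, complex_of_real ((p1+p2)/2)]]"
proof (rule eq_matI, goal_cases)
  case (1 i j)
  then have "i < 4" "j < 4" by (simp_all add: mat_of_rows_list_def)
  then show ?case
    apply (simp add: bell_diag_def proj_def bell_phi_plus_def bell_phi_minus_def bell_psi_plus_def bell_psi_minus_def mat_of_rows_list_def)
    apply (drule less4)+
    apply (elim disjE)
    apply (simp_all add: cs2 field_simps vec_index_vCons)
    done
qed (simp_all add: bell_diag_def proj_def bell_phi_plus_def bell_phi_minus_def bell_psi_plus_def bell_psi_minus_def mat_of_rows_list_def)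

definition "bP = (mat_of_rows_list 4 [[1,1,0,0],[0,0,1,1],[0,0,1,-1],[1,-1,0,0]] :: complex mat)"
definition "bQ = (let s = 1/2 in mat_of_rows_list 4 [[s,0,0,s],[s,0,0,-s],[0,s,s,0],[0,s,-s,0]] :: complex mat)"
definition "bD p1 p2 p3 p4 = mat_of_rows_list 4 [[complex_of_real p1,0,0,0],[0,complex_of_real p2,0,0],[0,0,complex_of_real p3,0],[0,0,0,complex_of_real p4]]"

lemma bPQ: "bP * bQ = 1\<^sub>m 4"
proof (rule eq_matI, goal_cases)
  case (1 i j)
  then have "i < 4" "j < 4" by (simp_all add: bP_def bQ_def mat_of_rows_list_def)
  then show ?case
    apply (simp add: bP_def bQ_def Let_def mat_of_rows_list_def scalar_prod_def sum4' row_def col_def)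
    apply (drule less4)+
    apply (elim disjE)
    apply (simp_all add: cs2 field_simps)
    done
qed (simp_all add: bP_def bQ_def Let_def mat_of_rows_list_def)

lemma bQP: "bQ * bP = 1\<^sub>m 4"
proof (rule eq_matI, goal_cases)
  case (1 i j)
  then have "i < 4" "j < 4" by (simp_all add: bP_def bQ_def mat_of_rows_list_def)
  then show ?case
    apply (simp add: bP_def bQ_def Let_def mat_of_rows_list_def scalar_prod_def sum4' row_def col_def)
    apply (drule less4)+
    apply (elim disjE)
    apply (simp_all add: cs2 field_simps)
    done
qed (simp_all add: bP_def bQ_def Let_def mat_of_rows_list_def)

lemma bPD: "bP * bD p1 p2 p3 p4 = mat_of_rows_list 4
   [[p1,p2,0,0],[0,0,p3,p4],[0,0,p3,-p4],[p1,-p2,0,0]]"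
proof (rule eq_matI, goal_cases)
  case (1 i j)
  then have "i < 4" "j < 4" by (simp_all add: Let_def mat_of_rows_list_def)
  then show ?case
    apply (simp add: bP_def bD_def Let_def mat_of_rows_list_def scalar_prod_def sum4' row_def col_def)
    apply (drule less4)+
    apply (elim disjE)
    apply (simp_all)
    done
qed (simp_all add: bP_def bD_def Let_def mat_of_rows_list_def)

lemma bsig: "bell_diag p1 p2 p3 p4 = bP * bD p1 p2 p3 p4 * bQ"
proof (rule eq_matI, goal_cases)
  case (1 i j)
  then have "i < 4" "j < 4" by (simp_all add: bP_def bQ_def bD_def Let_def mat_of_rows_list_def)
  then show ?case
    unfolding bPD bell_diag_explicit
    apply (simp add: bQ_def Let_def mat_of_rows_list_def scalar_prod_def sum4' row_def col_def)
    apply (drule less4)+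
    apply (elim disjE)
    apply (simp_all add: cs2 field_simps)
    done
qed (simp_all add: bell_diag_explicit bP_def bQ_def bD_def Let_def mat_of_rows_list_def)

lemma bsim: "similar_mat (bell_diag p1 p2 p3 p4) (bD p1 p2 p3 p4)"
proof -
  have "bell_diag p1 p2 p3 p4 \<in> carrier_mat 4 4" unfolding bell_diag_explicit
    by (rule mrl_carrier) simp
  moreover have "bD p1 p2 p3 p4 \<in> carrier_mat 4 4" unfolding bD_def
    by (rule mrl_carrier) simp
  moreover have "bP \<in> carrier_mat 4 4" unfolding bP_def
    by (rule mrl_carrier) simp
  moreover have "bQ \<in> carrier_mat 4 4" unfolding bQ_def Let_def
    by (rule mrl_carrier) simp
  ultimately have "{bell_diag p1 p2 p3 p4, bD p1 p2 p3 p4, bP, bQ} \<subseteq> carrier_mat 4 4" by auto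
  then show ?thesis by (rule similar_matI[OF _ bPQ bQP bsig])
qed

lemma char_bD: "char_poly (bD p1 p2 p3 p4) = (\<Prod>a\<leftarrow>[complex_of_real p1, complex_of_real p2, complex_of_real p3, complex_of_real p4]. [:-a,1:])"
proof -
  have c: "bD p1 p2 p3 p4 \<in> carrier_mat 4 4" unfolding bD_def by (rule mrl_carrier) simp
  have u: "upper_triangular (bD p1 p2 p3 p4)"
    unfolding upper_triangular_def
  proof (intro allI impI)
    fix i j assume i: "i < dim_row (bD p1 p2 p3 p4)" and j: "j < i"
    have "i < 4" using i by (simp add: bD_def mat_of_rows_list_def)
    then have i4: "i < 4" and j4: "j < 4" using j by auto
    show "bD p1 p2 p3 p4 $$ (i, j) = 0" using j less4[OF i4] less4[OF j4]
      by (elim disjE) (simp_all add: bD_def mat_of_rows_list_def)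
  qed
  have d: "diag_mat (bD p1 p2 p3 p4) = [complex_of_real p1, complex_of_real p2, complex_of_real p3, complex_of_real p4]"
    by (simp add: diag_mat_def bD_def mat_of_rows_list_def eval_nat_numeral)
  show ?thesis using char_poly_upper_triangular[OF c u] d by simp
qed

lemma char_bell: "char_poly (bell_diag p1 p2 p3 p4) = (\<Prod>a\<leftarrow>[complex_of_real p1, complex_of_real p2, complex_of_real p3, complex_of_real p4]. [:-a,1:])"
  using char_poly_similar[OF bsim] char_bD by simp

lemma ptrace_bell: assumes "p1+p2+p3+p4 = 1"
  shows "ptrace_A (bell_diag p1 p2 p3 p4) = mat_of_rows_list 2 [[1/2, 0], [0, 1/2]]"
proof (rule eq_matI, goal_cases)
  case (1 i j)
  have p4: "p4 = 1 - p1 - p2 - p3" using assms by simp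
  from 1 have "i < 2" "j < 2" by (simp_all add: mat_of_rows_list_def)
  then show ?case
    unfolding p4
    apply (simp add: ptrace_A_def bell_diag_explicit mat_of_rows_list_def)
    apply (drule less2)+
    apply (elim disjE)
    apply (simp_all add: field_simps)
    done
qed (simp_all add: ptrace_A_def mat_of_rows_list_def)

lemma char_half: "char_poly (mat_of_rows_list 2 [[1/2, 0], [0, 1/2]] :: complex mat) = (\<Prod>a\<leftarrow>[1/2, 1/2]. [:-a,1:])"
proof -
  have c: "(mat_of_rows_list 2 [[1/2, 0], [0, 1/2]] :: complex mat) \<in> carrier_mat 2 2" by (rule mrl_carrier) simp
  have u: "upper_triangular (mat_of_rows_list 2 [[1/2, 0], [0, 1/2]] :: complex mat)"
    unfolding upper_triangular_def
  proof (intro allI impI)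
    fix i j assume i: "i < dim_row (mat_of_rows_list 2 [[1/2, 0], [0, 1/2]] :: complex mat)" and j: "j < i"
    have "i < 2" using i by (simp add: mat_of_rows_list_def)
    then have i4: "i < 2" and j4: "j < 2" using j by auto
    show "(mat_of_rows_list 2 [[1/2, 0], [0, 1/2]] :: complex mat) $$ (i, j) = 0" using j less2[OF i4] less2[OF j4]
      by (elim disjE) (simp_all add: mat_of_rows_list_def)
  qed
  have d: "diag_mat (mat_of_rows_list 2 [[1/2, 0], [0, 1/2]] :: complex mat) = [1/2, 1/2]"
    by (simp add: diag_mat_def mat_of_rows_list_def eval_nat_numeral)
  show ?thesis using char_poly_upper_triangular[OF c u] d by simp
qed

lemma order_lin_prod: fixes as :: "complex list"
  shows "order z (\<Prod>a\<leftarrow>as. [:-a,1:]) = count_list as z \<and> (\<Prod>a\<leftarrow>as. [:-a,1:]) \<noteq> 0"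
proof (induction as)
  case Nil then show ?case by simp
next
  case (Cons a as)
  have nz: "[:-a,1:] \<noteq> (0::complex poly)" by simp
  have o: "order z [:-a,1:] = (if z = a then 1 else 0)"
  proof (cases "z = a")
    case True then show ?thesis using order_power_n_n[of a 1] by simp
  next
    case False then show ?thesis by (simp add: order_0I)
  qed
  have nzp: "[:-a,1:] * (\<Prod>a\<leftarrow>as. [:-a,1:]) \<noteq> 0" by (metis Cons.IH nz mult_eq_0_iff)
  have pr: "(\<Prod>b\<leftarrow>a#as. [:-b,1:]) = [:-a,1:] * (\<Prod>b\<leftarrow>as. [:-b,1:])" by simp
  have "order z (\<Prod>b\<leftarrow>a#as. [:-b,1:]) = count_list (a#as) z"
    unfolding pr order_mult[OF nzp] o using Cons.IH by simp
  moreover have "(\<Prod>b\<leftarrow>a#as. [:-b,1:]) \<noteq> 0" unfolding pr by (rule nzp)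
  ultimately show ?case by blast
qed

lemma poly_lin_prod: fixes as :: "complex list"
  shows "poly (\<Prod>a\<leftarrow>as. [:-a,1:]) z = (\<Prod>a\<leftarrow>as. z - a)"
  by (induction as) (auto simp: algebra_simps)

lemma sum_list_count_real: "sum_list (map f xs) = (\<Sum>x\<in>set xs. real (count_list xs x) * (f x :: real))"
proof (induction xs)
  case (Cons x xs)
  show ?case
  proof (cases "x \<in> set xs")
    case True
    have "(\<Sum>y\<in>set (x#xs). real (count_list (x#xs) y) * f y)
        = (\<Sum>y\<in>set xs. real (count_list xs y) * f y + (if x = y then f y else 0))"
      using True by (intro sum.cong) (auto simp: insert_absorb algebra_simps)
    also have "\<dots> = (\<Sum>y\<in>set xs. real (count_list xs y) * f y) + f x"
      using True by (simp add: sum.distrib)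
    finally show ?thesis using Cons.IH by simp
  next
    case False
    have "(\<Sum>y\<in>set (x#xs). real (count_list (x#xs) y) * f y)
        = real (count_list (x#xs) x) * f x + (\<Sum>y\<in>set xs. real (count_list (x#xs) y) * f y)"
      using False by simp
    also have "(\<Sum>y\<in>set xs. real (count_list (x#xs) y) * f y) = (\<Sum>y\<in>set xs. real (count_list xs y) * f y)"
      using False by (intro sum.cong) auto
    also have "count_list (x#xs) x = 1" using False by (simp add: count_list_0_iff)
    finally show ?thesis using Cons.IH by simp
  qed
qed simp

lemma vn_lin: fixes as :: "complex list"
  assumes "char_poly M = (\<Prod>a\<leftarrow>as. [:-a,1:])"
  shows "vn_entropy M = (\<Sum>a\<leftarrow>as. ent_term (Re a))"
proof -
  have s: "{z. poly (char_poly M) z = 0} = set as"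
    unfolding assms poly_lin_prod by (auto simp: prod_list_zero_iff)
  show ?thesis unfolding vn_entropy_def s
    by (simp add: assms order_lin_prod sum_list_count_real)
qed

lemma cond_bell: assumes "p1+p2+p3+p4 = 1"
  shows "cond_entropy (bell_diag p1 p2 p3 p4) = ent_term p1 + ent_term p2 + ent_term p3 + ent_term p4 - 1"
proof -
  have "vn_entropy (ptrace_A (bell_diag p1 p2 p3 p4)) = 1"
    unfolding ptrace_bell[OF assms] vn_lin[OF char_half] by (simp add: ent_term_def log_divide)
  then show ?thesis unfolding cond_entropy_def vn_lin[OF char_bell] by simp
qed

lemma qobs_explicit: "qubit_obs v1 v2 v3 = mat_of_rows_list 2
  [[complex_of_real v3, complex_of_real v1 - \<i> * complex_of_real v2],
   [complex_of_real v1 + \<i> * complex_of_real v2, - complex_of_real v3]]"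
proof (rule eq_matI, goal_cases)
  case (1 i j)
  then have "i < 2" "j < 2" by (simp_all add: mat_of_rows_list_def)
  then show ?case
    apply (simp add: qubit_obs_def pauli_x_def pauli_y_def pauli_z_def mat_of_rows_list_def)
    apply (drule less2)+
    apply (elim disjE)
    apply (simp_all add: algebra_simps)
    done
qed (simp_all add: qubit_obs_def pauli_x_def pauli_y_def pauli_z_def mat_of_rows_list_def)

lemma sum4: "(\<Sum>i<(4::nat). f i) = f 0 + f 1 + f 2 + (f 3 :: 'a :: comm_monoid_add)"
  by (simp add: eval_nat_numeral ac_simps)

lemma trace_kron: "mtrace (bell_diag p1 p2 p3 p4 * kron2 (qubit_obs a1 a2 a3) (qubit_obs b1 b2 b3))
  = complex_of_real ((p1 - p2 + p3 - p4) * a1 * b1 + (- p1 + p2 + p3 - p4) * a2 * b2 + (p1 + p2 - p3 - p4) * a3 * b3)"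
  unfolding mtrace_def bell_diag_explicit qobs_explicit kron2_def
  apply (simp add: mat_of_rows_list_def sum4 scalar_prod_def sum4' row_def col_def)
  apply (rule complex_eqI)
  apply (simp_all add: field_simps)
  done

lemma mtrace_add: "M \<in> carrier_mat n n \<Longrightarrow> N \<in> carrier_mat n n \<Longrightarrow> mtrace (M + N) = mtrace M + mtrace N"
  unfolding mtrace_def by (simp add: sum.distrib)

lemma mtrace_minus: "M \<in> carrier_mat n n \<Longrightarrow> N \<in> carrier_mat n n \<Longrightarrow> mtrace (M - N) = mtrace M - mtrace N"
  unfolding mtrace_def by (simp add: sum_subtractf)

lemma kron2_carrier: "kron2 A B \<in> carrier_mat 4 4"
  unfolding kron2_def by simp

lemma bell_carrier: "bell_diag p1 p2 p3 p4 \<in> carrier_mat 4 4"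
  unfolding bell_diag_explicit by (rule mrl_carrier) simp

lemma distr4:
  assumes S: "S \<in> carrier_mat 4 4" and A: "A \<in> carrier_mat 4 4" and B: "B \<in> carrier_mat 4 4"
    and C: "C \<in> carrier_mat 4 4" and D: "D \<in> carrier_mat 4 4"
  shows "mtrace (S * (A + B + C - D)) = mtrace (S * A) + mtrace (S * B) + mtrace (S * C) - mtrace (S * D)"
proof -
  have ab: "A + B \<in> carrier_mat 4 4" using A B by simp
  have abc: "A + B + C \<in> carrier_mat 4 4" using ab C by simp
  have e1: "S * (A + B + C - D) = S * (A + B + C) - S * D" by (rule mult_minus_distrib_mat[OF S abc D])
  have e2: "S * (A + B + C) = S * (A + B) + S * C" by (rule mult_add_distrib_mat[OF S ab C])
  have e3: "S * (A + B) = S * A + S * B" by (rule mult_add_distrib_mat[OF S A B])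
  have SA: "S * A \<in> carrier_mat 4 4" using S A by simp
  have SB: "S * B \<in> carrier_mat 4 4" using S B by simp
  have SC: "S * C \<in> carrier_mat 4 4" using S C by simp
  have SD: "S * D \<in> carrier_mat 4 4" using S D by simp
  have SAB: "S * A + S * B \<in> carrier_mat 4 4" using SA SB by simp
  have SABC: "S * A + S * B + S * C \<in> carrier_mat 4 4" using SAB SC by simp
  show ?thesis unfolding e1 e2 e3
    by (simp add: mtrace_minus[OF SABC SD] mtrace_add[OF SAB SC] mtrace_add[OF SA SB])
qed

lemma chsh_formula:
  "chsh_omega (bell_diag p1 p2 p3 p4) (qubit_obs x1 x2 x3) (qubit_obs y1 y2 y3) (qubit_obs b1 b2 b3) (qubit_obs c1 c2 c3)
   = 1/2 + ((p1 - p2 + p3 - p4) * (x1*(b1+c1) + y1*(b1-c1)) + (- p1 + p2 + p3 - p4) * (x2*(b2+c2) + y2*(b2-c2))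
        + (p1 + p2 - p3 - p4) * (x3*(b3+c3) + y3*(b3-c3))) / 8"
  unfolding chsh_omega_def distr4[OF bell_carrier kron2_carrier kron2_carrier kron2_carrier kron2_carrier] trace_kron
  by (simp add: algebra_simps)

lemma hb: "0 \<le> (t::real) \<Longrightarrow> t \<le> 1 \<Longrightarrow> 0 \<le> (1 - t)/2 \<and> (1 - t)/2 \<le> 1 \<and> 0 \<le> 1 - (1-t)/2 \<and> 1 - (1-t)/2 \<le> 1"
  by auto

definition gfun :: "real \<Rightarrow> real" where
  "gfun s = bin_entropy ((1 - sqrt s) / 2)"

lemma ent_term_alt: "x \<ge> 0 \<Longrightarrow> ent_term x = - (x * ln x) / ln 2"
  by (cases "x = 0") (auto simp: ent_term_def log_def)

lemma xlnx_cont: "continuous_on {0..1} (\<lambda>x::real. x * ln x)"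
proof (rule continuous_on_IccI)
  show "((\<lambda>x::real. x * ln x) \<longlongrightarrow> 0 * ln 0) (at_right 0)" by simp real_asymp
  show "((\<lambda>x::real. x * ln x) \<longlongrightarrow> 1 * ln 1) (at_left 1)"
    by (intro tendsto_intros) auto
  fix x :: real assume "0 < x" "x < 1"
  then show "(\<lambda>x. x * ln x) \<midarrow>x\<rightarrow> x * ln x" by (intro tendsto_intros) auto
qed auto

lemma ent_cont: "continuous_on {0..1} ent_term"
proof -
  have "continuous_on {0..1} (\<lambda>x::real. - (x * ln x) / ln 2)"
    by (intro continuous_intros xlnx_cont) auto
  moreover have "continuous_on {0..1} ent_term = continuous_on {0..1} (\<lambda>x::real. - (x * ln x) / ln 2)"
    by (rule continuous_on_cong) (auto simp: ent_term_alt)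
  ultimately show ?thesis by simp
qed

lemma gfun_cont: "continuous_on {0..1} gfun"
proof -
  have c1: "continuous_on {0..1} (\<lambda>s::real. (1 - sqrt s) / 2)" by (intro continuous_intros) auto
  have c2: "continuous_on {0..1} (\<lambda>s::real. 1 - (1 - sqrt s) / 2)" by (intro continuous_intros) auto
  have i1: "(\<lambda>s::real. (1 - sqrt s) / 2) ` {0..1} \<subseteq> {0..1}"
  proof
    fix y assume "y \<in> (\<lambda>s::real. (1 - sqrt s) / 2) ` {0..1}"
    then obtain s where s: "s \<in> {0..1}" "y = (1 - sqrt s) / 2" by auto
    moreover from s have "0 \<le> sqrt s" "sqrt s \<le> 1" by auto
    ultimately have "0 \<le> (1 - sqrt s)/2 \<and> (1 - sqrt s)/2 \<le> 1 \<and> 0 \<le> 1 - (1 - sqrt s)/2 \<and> 1 - (1 - sqrt s)/2 \<le> 1"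
      using hb[of "sqrt s"] by blast
    then show "y \<in> {0..1}" by (simp only: s(2) atLeastAtMost_iff)
  qed
  have i2: "(\<lambda>s::real. 1 - (1 - sqrt s) / 2) ` {0..1} \<subseteq> {0..1}"
  proof
    fix y assume "y \<in> (\<lambda>s::real. 1 - (1 - sqrt s) / 2) ` {0..1}"
    then obtain s where s: "s \<in> {0..1}" "y = 1 - (1 - sqrt s) / 2" by auto
    moreover from s have "0 \<le> sqrt s" "sqrt s \<le> 1" by auto
    ultimately have "0 \<le> (1 - sqrt s)/2 \<and> (1 - sqrt s)/2 \<le> 1 \<and> 0 \<le> 1 - (1 - sqrt s)/2 \<and> 1 - (1 - sqrt s)/2 \<le> 1"
      using hb[of "sqrt s"] by blast
    then show "y \<in> {0..1}" by (simp only: s(2) atLeastAtMost_iff)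
  qed
  have "continuous_on {0..1} (\<lambda>s. ent_term ((1 - sqrt s) / 2))"
    by (rule continuous_on_compose2[OF ent_cont c1 i1])
  moreover have "continuous_on {0..1} (\<lambda>s. ent_term (1 - (1 - sqrt s) / 2))"
    by (rule continuous_on_compose2[OF ent_cont c2 i2])
  ultimately show ?thesis unfolding gfun_def bin_entropy_def by (intro continuous_intros)
qed

definition kfun :: "real \<Rightarrow> real" where
  "kfun r = r * (1/(1+r) + 1/(1-r)) - (ln (1+r) - ln (1-r))"

lemma kfun_deriv: "0 \<le> r \<Longrightarrow> r < 1 \<Longrightarrow> DERIV kfun r :> r * (1/(1-r)^2 - 1/(1+r)^2)"
  unfolding kfun_def
  apply (rule derivative_eq_intros refl | simp)+
  apply (simp add: field_simps power2_eq_square)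
  done

lemma kfun_nonneg: assumes "0 \<le> r" "r < 1" shows "kfun r \<ge> 0"
proof -
  have "kfun 0 \<le> kfun r"
  proof (rule DERIV_nonneg_imp_nondecreasing[OF assms(1)])
    fix x assume x: "0 \<le> x" "x \<le> r"
    then have x1: "x < 1" using assms by simp
    have "(1 - x)^2 \<le> (1 + x)^2" using x x1 by (intro power_mono) auto
    moreover have "0 < (1 - x)^2" using x1 by simp
    moreover have "0 < (1 + x)^2 * (1 - x)^2" using x x1 by (intro mult_pos_pos) auto
    ultimately have "1/(1+x)^2 \<le> 1/(1-x)^2" by (intro divide_left_mono) auto
    then have "0 \<le> x * (1/(1-x)^2 - 1/(1+x)^2)" using x by simp
    then show "\<exists>y. DERIV kfun x :> y \<and> 0 \<le> y" using kfun_deriv[OF x(1) x1] by blast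
  qed
  then show ?thesis by (simp add: kfun_def)
qed

definition phi :: "real \<Rightarrow> real" where
  "phi r = (ln (1+r) - ln (1-r)) / r"

lemma phi_deriv: "0 < r \<Longrightarrow> r < 1 \<Longrightarrow> DERIV phi r :> kfun r / r^2"
  unfolding phi_def kfun_def
  apply (rule derivative_eq_intros refl | simp)+
  apply (simp add: field_simps power2_eq_square)
  done

lemma phi_mono: assumes "0 < a" "a \<le> b" "b < 1" shows "phi a \<le> phi b"
proof (rule DERIV_nonneg_imp_nondecreasing[OF assms(2)])
  fix x assume x: "a \<le> x" "x \<le> b"
  then have "0 < x" "x < 1" using assms by auto
  then show "\<exists>y. DERIV phi x :> y \<and> 0 \<le> y"
    using phi_deriv kfun_nonneg by (meson divide_nonneg_pos less_imp_le zero_less_power)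
qed

lemma phi_pos: assumes "0 < r" "r < 1" shows "0 < phi r"
proof -
  have "ln (1-r) < ln (1+r)" using assms by simp
  then show ?thesis using assms by (simp add: phi_def)
qed

definition gD :: "real \<Rightarrow> real" where
  "gD s = - phi (sqrt s) / (4 * ln 2)"

definition Hf :: "real \<Rightarrow> real" where
  "Hf q = - (q * ln q + (1 - q) * ln (1 - q)) / ln 2"

lemma Hf_deriv: assumes "0 < q" "q < 1" shows "DERIV Hf q :> (ln (1-q) - ln q) / ln 2"
  unfolding Hf_def
  apply (rule derivative_eq_intros refl | use assms in simp)+
  done

lemma u_deriv: assumes "0 < s" shows "DERIV (\<lambda>s. (1 - sqrt s) / 2) s :> - (1 / (4 * sqrt s))"
proof -
  have D: "DERIV (\<lambda>s. (1 - sqrt s) / 2) s :> (0 - inverse (sqrt s) / 2) / 2"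
    by (intro DERIV_cdivide DERIV_diff DERIV_const DERIV_real_sqrt assms)
  have eq: "(0 - inverse (sqrt s) / 2) / 2 = - (1 / (4 * sqrt s))"
    by (simp add: inverse_eq_divide)
  show ?thesis using D unfolding eq .
qed

lemma G_deriv: assumes "0 < s" "s < 1" shows "DERIV (\<lambda>s. Hf ((1 - sqrt s) / 2)) s :> gD s"
proof -
  have r: "0 < sqrt s" "sqrt s < 1" using assms by auto
  have q1: "0 < (1 - sqrt s) / 2" using r(2) by simp
  have q2: "(1 - sqrt s) / 2 < 1"
  proof -
    have "0 < 1 + sqrt s" using r(1) by linarith
    then show ?thesis by (simp add: field_simps)
  qed
  note q = q1 q2
  have D: "DERIV (\<lambda>s. Hf ((1 - sqrt s) / 2)) s :> (ln (1 - (1 - sqrt s) / 2) - ln ((1 - sqrt s) / 2)) / ln 2 * - (1 / (4 * sqrt s))"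
    by (rule DERIV_chain2[OF Hf_deriv[OF q] u_deriv[OF assms(1)]])
  have L: "ln (1 - (1 - sqrt s) / 2) - ln ((1 - sqrt s) / 2) = ln (1 + sqrt s) - ln (1 - sqrt s)"
  proof -
    have e: "1 - (1 - sqrt s) / 2 = (1 + sqrt s) / 2" by (simp add: field_simps)
    have p1: "0 < 1 + sqrt s" using r(1) by linarith
    have p2: "0 < 1 - sqrt s" using r(2) by linarith
    have a: "ln ((1 + sqrt s) / 2) = ln (1 + sqrt s) - ln 2" using p1 by (simp add: ln_div)
    have b: "ln ((1 - sqrt s) / 2) = ln (1 - sqrt s) - ln 2" using p2 by (simp add: ln_div)
    show ?thesis unfolding e a b by simp
  qed
  have aux: "\<And>X t::real. t \<noteq> 0 \<Longrightarrow> X / ln 2 * - (1 / (4 * t)) = - (X / t) / (4 * ln 2)"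
    by (simp add: field_simps)
  show ?thesis using D unfolding L aux[OF r(1)[THEN less_imp_neq, symmetric]] gD_def phi_def .

qed

lemma Hf_eq: assumes "0 \<le> q" "q \<le> 1" shows "bin_entropy q = Hf q"
proof -
  have q1: "0 \<le> 1 - q" using assms by simp
  have aux: "\<And>A B c::real. - A / c + - B / c = - (A + B) / c" by (metis add_divide_distrib minus_add_distrib)
  show ?thesis unfolding bin_entropy_def Hf_def ent_term_alt[OF assms(1)] ent_term_alt[OF q1]
    by (rule aux)
qed

lemma gfun_deriv: assumes "0 < s" "s < 1" shows "DERIV gfun s :> gD s"
proof (rule has_field_derivative_transform_within_open[OF G_deriv[OF assms], of "{0<..<1}"])
  show "open {0<..<(1::real)}" by simp
  show "s \<in> {0<..<1}" using assms by simp
  fix x :: real assume "x \<in> {0<..<1}"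
  then have "0 \<le> sqrt x" "sqrt x \<le> 1" by auto
  then have "0 \<le> (1 - sqrt x) / 2" "(1 - sqrt x) / 2 \<le> 1" using hb[of "sqrt x"] by simp_all

  then show "Hf ((1 - sqrt x) / 2) = gfun x" unfolding gfun_def by (simp add: Hf_eq)
qed

lemma gD_mono: assumes "0 < a" "a \<le> b" "b < 1" shows "gD b \<le> gD a"
proof -
  have "phi (sqrt a) \<le> phi (sqrt b)" using assms by (intro phi_mono) auto
  moreover have "0 < ln (2::real)" by simp
  ultimately show ?thesis unfolding gD_def by (simp add: divide_right_mono)
qed

lemma gD_nonpos: assumes "0 < a" "a < 1" shows "gD a \<le> 0"
proof -
  have "0 < phi (sqrt a)" using assms by (intro phi_pos) auto
  moreover have "0 < ln (2::real)" by simp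
  ultimately show ?thesis unfolding gD_def by simp
qed

lemma gfun_diff: "0 < z \<Longrightarrow> z < 1 \<Longrightarrow> gfun differentiable (at z)"
  using gfun_deriv real_differentiable_def by blast

lemma gfun_mvt: assumes "0 \<le> x" "x < y" "y \<le> 1"
  shows "\<exists>z. x < z \<and> z < y \<and> gfun y - gfun x = (y - x) * gD z"
proof -
  have c: "continuous_on {x..y} gfun" using gfun_cont by (rule continuous_on_subset) (use assms in auto)
  have d: "\<And>z. x < z \<Longrightarrow> z < y \<Longrightarrow> gfun differentiable (at z)"
    using assms by (intro gfun_diff) auto
  obtain l z where z: "x < z" "z < y" "DERIV gfun z :> l" "gfun y - gfun x = (y - x) * l"
    using MVT[OF assms(2) c d] by blast
  have "l = gD z" using DERIV_unique[OF z(3) gfun_deriv] z assms by auto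
  then show ?thesis using z by blast
qed

lemma g_concave: assumes "0 \<le> x" "x \<le> y" "y \<le> 1"
  shows "gfun x + gfun y \<le> 2 * gfun ((x + y) / 2)"
proof (cases "x = y")
  case True then show ?thesis by simp
next
  case False
  then have xy: "x < y" using assms by simp
  define m where "m = (x + y) / 2"
  have m: "x < m" "m < y" using xy by (auto simp: m_def)
  obtain z1 where z1: "x < z1" "z1 < m" "gfun m - gfun x = (m - x) * gD z1"
    using gfun_mvt[OF assms(1) m(1)] m assms by auto
  obtain z2 where z2: "m < z2" "z2 < y" "gfun y - gfun m = (y - m) * gD z2"
    using gfun_mvt[of m y] m assms by auto
  have "gD z2 \<le> gD z1" using z1 z2 assms by (intro gD_mono) auto
  moreover have "y - m = m - x" by (simp add: m_def field_simps)
  moreover have "0 < m - x" using m by simp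
  ultimately have "(m - x) * gD z2 \<le> (m - x) * gD z1" by (intro mult_left_mono) auto
  then have "gfun y - gfun m \<le> gfun m - gfun x" using z1(3) z2(3) \<open>y - m = m - x\<close> by simp
  then show ?thesis by (simp add: m_def)
qed

lemma g_antimono: assumes "0 \<le> x" "x \<le> y" "y \<le> 1" shows "gfun y \<le> gfun x"
proof (cases "x = y")
  case True then show ?thesis by simp
next
  case False
  then have xy: "x < y" using assms by simp
  obtain z where z: "x < z" "z < y" "gfun y - gfun x = (y - x) * gD z"
    using gfun_mvt[OF assms(1) xy assms(3)] by auto
  have "gD z \<le> 0" using z assms by (intro gD_nonpos) auto
  then have "(y - x) * gD z \<le> 0" using xy by (simp add: mult_nonneg_nonpos)
  then show ?thesis using z by simp
qed


lemma cs3: fixes p1 p2 p3 q1 q2 q3 :: real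
  shows "p1*q1+p2*q2+p3*q3 \<le> sqrt (p1^2+p2^2+p3^2) * sqrt (q1^2+q2^2+q3^2)"
proof -
  have "(p1^2+p2^2+p3^2) * (q1^2+q2^2+q3^2) - (p1*q1+p2*q2+p3*q3)^2
      = (p1*q2-p2*q1)^2 + (p1*q3-p3*q1)^2 + (p2*q3-p3*q2)^2"
    by (simp add: power2_eq_square algebra_simps)
  moreover have "0 \<le> (p1*q2-p2*q1)^2 + (p1*q3-p3*q1)^2 + (p2*q3-p3*q2)^2" by simp
  ultimately have "(p1*q1+p2*q2+p3*q3)^2 \<le> (p1^2+p2^2+p3^2) * (q1^2+q2^2+q3^2)" by linarith
  then have "p1*q1+p2*q2+p3*q3 \<le> sqrt ((p1^2+p2^2+p3^2) * (q1^2+q2^2+q3^2))"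
    by (rule real_le_rsqrt)
  then show ?thesis by (simp add: real_sqrt_mult)
qed

lemma weights:
  fixes t1 t2 t3 c1 c2 c3 K :: real
  assumes "t3^2 \<le> t1^2" "t3^2 \<le> t2^2" "c1 \<le> K" "c2 \<le> K" "c1 + c2 + c3 = 2 * K"
  shows "t1^2 * c1 + t2^2 * c2 + t3^2 * c3 \<le> (t1^2 + t2^2) * K"
proof -
  have h1: "(t1^2 - t3^2) * c1 \<le> (t1^2 - t3^2) * K" using assms by (intro mult_left_mono) auto
  have h2: "(t2^2 - t3^2) * c2 \<le> (t2^2 - t3^2) * K" using assms by (intro mult_left_mono) auto
  have c3: "c3 = 2 * K - c1 - c2" using assms(5) by simp
  have "t1^2 * c1 + t2^2 * c2 + t3^2 * c3 = (t1^2 - t3^2) * c1 + (t2^2 - t3^2) * c2 + 2 * t3^2 * K"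
    unfolding c3 by (simp add: algebra_simps)
  also have "\<dots> \<le> (t1^2 - t3^2) * K + (t2^2 - t3^2) * K + 2 * t3^2 * K"
    using h1 h2 by (intro add_mono order_refl)
  also have "\<dots> = (t1^2 + t2^2) * K" by (simp add: algebra_simps)
  finally show ?thesis .
qed

lemma bessel1:
  fixes u1 u2 u3 w1 w2 w3 :: real
  assumes "u1*w1 + u2*w2 + u3*w3 = 0"
  shows "u1^2 * (w1^2+w2^2+w3^2) + w1^2 * (u1^2+u2^2+u3^2) \<le> (u1^2+u2^2+u3^2) * (w1^2+w2^2+w3^2)"
proof -
  have "(u1^2+u2^2+u3^2) * (w1^2+w2^2+w3^2) - (u1^2 * (w1^2+w2^2+w3^2) + w1^2 * (u1^2+u2^2+u3^2))
      = (u2*w3 - u3*w2)^2 + (u2*w2 + u3*w3 - u1*w1) * (u1*w1 + u2*w2 + u3*w3)"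
    by (simp add: power2_eq_square algebra_simps)
  then have "(u1^2+u2^2+u3^2) * (w1^2+w2^2+w3^2) - (u1^2 * (w1^2+w2^2+w3^2) + w1^2 * (u1^2+u2^2+u3^2))
      = (u2*w3 - u3*w2)^2" using assms by simp
  then show ?thesis by (metis diff_ge_0_iff_ge zero_le_power2)
qed

lemma key_vec:
  fixes t1 t2 t3 x1 x2 x3 y1 y2 y3 b1 b2 b3 c1 c2 c3 :: real
  assumes x: "x1^2+x2^2+x3^2 = 1" and y: "y1^2+y2^2+y3^2 = 1"
    and b: "b1^2+b2^2+b3^2 = 1" and c: "c1^2+c2^2+c3^2 = 1"
    and t31: "t3^2 \<le> t1^2" and t32: "t3^2 \<le> t2^2"
  shows "t1*(x1*(b1+c1) + y1*(b1-c1)) + t2*(x2*(b2+c2) + y2*(b2-c2)) + t3*(x3*(b3+c3) + y3*(b3-c3))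
         \<le> 2 * sqrt (t1^2 + t2^2)"
proof -
  define u1 u2 u3 w1 w2 w3 where "u1 = b1+c1" "u2 = b2+c2" "u3 = b3+c3" "w1 = b1-c1" "w2 = b2-c2" "w3 = b3-c3"
  define U W where "U = u1^2+u2^2+u3^2" "W = w1^2+w2^2+w3^2"
  define X Y where "X = t1^2*u1^2+t2^2*u2^2+t3^2*u3^2" "Y = t1^2*w1^2+t2^2*w2^2+t3^2*w3^2"
  define M where "M = t1^2 + t2^2"
  have UW: "U + W = 4" using b c unfolding U_W_def u1_u2_u3_w1_w2_w3_def
    by (simp add: power2_eq_square algebra_simps)
  have orth: "u1*w1 + u2*w2 + u3*w3 = 0" using b c unfolding u1_u2_u3_w1_w2_w3_def
    by (simp add: power2_eq_square algebra_simps)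
  have A: "x1*(t1*u1) + x2*(t2*u2) + x3*(t3*u3) \<le> sqrt X"
    using cs3[of x1 "t1*u1" x2 "t2*u2" x3 "t3*u3"] x unfolding X_Y_def by (simp add: power_mult_distrib)
  have B: "y1*(t1*w1) + y2*(t2*w2) + y3*(t3*w3) \<le> sqrt Y"
    using cs3[of y1 "t1*w1" y2 "t2*w2" y3 "t3*w3"] y unfolding X_Y_def by (simp add: power_mult_distrib)
  have lhs: "t1*(x1*(b1+c1) + y1*(b1-c1)) + t2*(x2*(b2+c2) + y2*(b2-c2)) + t3*(x3*(b3+c3) + y3*(b3-c3))
     = (x1*(t1*u1) + x2*(t2*u2) + x3*(t3*u3)) + (y1*(t1*w1) + y2*(t2*w2) + y3*(t3*w3))"
    unfolding u1_u2_u3_w1_w2_w3_def by (simp add: algebra_simps)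
  have M0: "0 \<le> M" unfolding M_def by simp
  have U0: "0 \<le> U" "0 \<le> W" unfolding U_W_def by simp_all
  have tM1: "t1^2 \<le> M" unfolding M_def by simp
  have tM2: "t2^2 \<le> M" unfolding M_def by simp
  have tM3: "t3^2 \<le> M" using t31 zero_le_power2[of t2] unfolding M_def by linarith
  note tM = tM1 tM2 tM3
  have XM: "X \<le> M * U"
  proof -
    have "t1^2*u1^2 \<le> M*u1^2" "t2^2*u2^2 \<le> M*u2^2" "t3^2*u3^2 \<le> M*u3^2"
      using tM by (simp_all add: mult_right_mono)
    then show ?thesis unfolding X_Y_def U_W_def by (simp add: algebra_simps)
  qed
  have YM: "Y \<le> M * W"
  proof -
    have "t1^2*w1^2 \<le> M*w1^2" "t2^2*w2^2 \<le> M*w2^2" "t3^2*w3^2 \<le> M*w3^2"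
      using tM by (simp_all add: mult_right_mono)
    then show ?thesis unfolding X_Y_def U_W_def by (simp add: algebra_simps)
  qed
  have X0: "0 \<le> X" "0 \<le> Y" unfolding X_Y_def by simp_all
  have sq4: "\<And>Z. Z \<le> 4 * M \<Longrightarrow> sqrt Z \<le> 2 * sqrt M"
  proof -
    fix Z assume "Z \<le> 4 * M"
    then have "sqrt Z \<le> sqrt (4 * M)" by (rule real_sqrt_le_mono)
    also have "sqrt (4 * M) = 2 * sqrt M" by (simp add: real_sqrt_mult)
    finally show "sqrt Z \<le> 2 * sqrt M" .
  qed
  have C: "sqrt X + sqrt Y \<le> 2 * sqrt M"
  proof (cases "U = 0 \<or> W = 0")
    case True
    then show ?thesis
    proof
      assume U: "U = 0"
      then have "X \<le> 0" using XM by simp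
      then have "X = 0" using X0 by simp
      moreover have "Y \<le> 4 * M" using YM UW U by simp
      ultimately show ?thesis using X0 M0 sq4 by simp
    next
      assume W: "W = 0"
      then have "Y \<le> 0" using YM by simp
      then have "Y = 0" using X0 by simp
      moreover have "X \<le> 4 * M" using XM UW W by simp
      ultimately show ?thesis using X0 M0 sq4 by simp
    qed
  next
    case False
    then have Up: "0 < U" "0 < W" using U0 by auto
    have c1: "u1^2 * W + w1^2 * U \<le> U * W" using bessel1[OF orth] unfolding U_W_def by simp
    have c2: "u2^2 * W + w2^2 * U \<le> U * W"
      using bessel1[of u2 w2 u3 w3 u1 w1] orth unfolding U_W_def by (simp add: algebra_simps)
    have csum: "(u1^2 * W + w1^2 * U) + (u2^2 * W + w2^2 * U) + (u3^2 * W + w3^2 * U) = 2 * (U * W)"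
      unfolding U_W_def by (simp add: algebra_simps)
    have "t1^2 * (u1^2 * W + w1^2 * U) + t2^2 * (u2^2 * W + w2^2 * U) + t3^2 * (u3^2 * W + w3^2 * U)
          \<le> (t1^2 + t2^2) * (U * W)"
      by (rule weights[OF t31 t32 c1 c2 csum])
    then have key: "X * W + Y * U \<le> M * (U * W)" unfolding X_Y_def M_def by (simp add: algebra_simps)
    define x y where "x = sqrt X" "y = sqrt Y"
    have xx: "x^2 = X" "y^2 = Y" using X0 unfolding x_y_def by simp_all
    have "(x^2 * W + y^2 * U) * (U + W) - U * W * (x + y)^2 = (x * W - y * U)^2"
      by (simp add: power2_eq_square algebra_simps)
    then have "U * W * (x + y)^2 \<le> (x^2 * W + y^2 * U) * (U + W)"
      by (metis diff_ge_0_iff_ge zero_le_power2)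
    also have "\<dots> \<le> M * (U * W) * 4" using key xx UW by simp
    finally have "(U * W) * (x + y)^2 \<le> (U * W) * (4 * M)" by (simp add: algebra_simps)
    then have "(x + y)^2 \<le> 4 * M" using Up by (simp add: mult_le_cancel_left_pos)
    then have "x + y \<le> sqrt (4 * M)" by (rule real_le_rsqrt)
    then show ?thesis unfolding x_y_def by (simp add: real_sqrt_mult)
  qed
  show ?thesis unfolding lhs M_def[symmetric] using A B C by linarith
qed

lemma ent_term_log: "0 \<le> x \<Longrightarrow> ent_term x = - x * log 2 x"
  by (cases "x = 0") (auto simp: ent_term_def)

lemma cell: fixes p r s :: real
  assumes "0 \<le> p" "p \<le> r" "p \<le> s"
  shows "ent_term p \<le> - p * log 2 r - p * log 2 s + (r * s - p) / ln 2"
proof (cases "p = 0")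
  case True
  have "0 \<le> r * s" using assms True by simp
  then show ?thesis using True by (simp add: ent_term_def)
next
  case False
  then have p: "0 < p" using assms by simp
  then have r: "0 < r" and s: "0 < s" using assms by auto
  have l2: "0 < ln (2::real)" by simp
  have "ln (r * s / p) \<le> r * s / p - 1" using p r s by (intro ln_le_minus_one) simp
  moreover have "ln (r * s / p) = ln r + ln s - ln p" using p r s by (simp add: ln_div ln_mult)
  ultimately have "p * (ln r + ln s - ln p) \<le> p * (r * s / p - 1)"
    using p by (intro mult_left_mono) auto
  also have "p * (r * s / p - 1) = r * s - p" using p by (simp add: field_simps)
  finally have key: "p * ln r + p * ln s - p * ln p \<le> r * s - p" by (simp add: algebra_simps)
  have "ent_term p = - (p * ln p) / ln 2" using p by (simp add: ent_term_def log_def)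
  moreover have "- p * log 2 r - p * log 2 s + (r * s - p) / ln 2
        = (- p * ln r - p * ln s + (r * s - p)) / ln 2" by (simp add: log_def field_simps)
  moreover have "- (p * ln p) / ln 2 \<le> (- p * ln r - p * ln s + (r * s - p)) / ln 2"
    using key l2 by (intro divide_right_mono) auto
  ultimately show ?thesis by simp
qed

lemma subadd:
  fixes a b c d :: real
  assumes "0 \<le> a" "0 \<le> b" "0 \<le> c" "0 \<le> d" "a + b + c + d = 1"
  shows "ent_term a + ent_term b + ent_term c + ent_term d \<le> bin_entropy (a + b) + bin_entropy (a + c)"
proof -
  have ca: "ent_term a \<le> - a * log 2 (a+b) - a * log 2 (a+c) + ((a+b)*(a+c) - a) / ln 2"
    using assms by (intro cell) auto
  have cb: "ent_term b \<le> - b * log 2 (a+b) - b * log 2 (b+d) + ((a+b)*(b+d) - b) / ln 2"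
    using assms by (intro cell) auto
  have cc: "ent_term c \<le> - c * log 2 (c+d) - c * log 2 (a+c) + ((c+d)*(a+c) - c) / ln 2"
    using assms by (intro cell) auto
  have cd: "ent_term d \<le> - d * log 2 (c+d) - d * log 2 (b+d) + ((c+d)*(b+d) - d) / ln 2"
    using assms by (intro cell) auto
  have z: "((a+b)*(a+c) - a) / ln 2 + ((a+b)*(b+d) - b) / ln 2 + ((c+d)*(a+c) - c) / ln 2 + ((c+d)*(b+d) - d) / ln 2 = 0"
  proof -
    have "((a+b)*(a+c) - a) + ((a+b)*(b+d) - b) + ((c+d)*(a+c) - c) + ((c+d)*(b+d) - d)
        = (a+b+c+d) * (a+b+c+d) - (a+b+c+d)" by (simp add: algebra_simps)
    also have "\<dots> = 0" using assms(5) by simp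
    finally show ?thesis by (simp add: add_divide_distrib[symmetric])
  qed
  have e1: "1 - (a + b) = c + d" "1 - (a + c) = b + d" using assms(5) by simp_all
  have "bin_entropy (a + b) + bin_entropy (a + c)
      = ent_term (a+b) + ent_term (c+d) + ent_term (a+c) + ent_term (b+d)"
    unfolding bin_entropy_def e1 by simp
  also have "\<dots> = (- a * log 2 (a+b) - b * log 2 (a+b)) + (- c * log 2 (c+d) - d * log 2 (c+d))
      + (- a * log 2 (a+c) - c * log 2 (a+c)) + (- b * log 2 (b+d) - d * log 2 (b+d))"
    using assms by (simp add: ent_term_log algebra_simps)
  finally have eq: "bin_entropy (a + b) + bin_entropy (a + c) = \<dots>" .
  show ?thesis unfolding eq using ca cb cc cd z by linarith
qed

lemma bin_sym: "bin_entropy (1 - q) = bin_entropy q"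
  unfolding bin_entropy_def by (simp add: add.commute)

lemma bin_gfun: assumes "0 \<le> q" "q \<le> 1" shows "bin_entropy q = gfun ((2*q - 1)^2)"
proof -
  have s: "sqrt ((2*q - 1)^2) = \<bar>2*q - 1\<bar>" by simp
  show ?thesis
  proof (cases "1/2 \<le> q")
    case True
    then have ab: "\<bar>2*q - 1\<bar> = 2*q - 1" by simp
    have e: "(1 - sqrt ((2*q - 1)^2)) / 2 = 1 - q" unfolding s ab by (simp add: field_simps)
    show ?thesis unfolding gfun_def e bin_sym ..
  next
    case False
    then have ab: "\<bar>2*q - 1\<bar> = 1 - 2*q" by simp
    have e: "(1 - sqrt ((2*q - 1)^2)) / 2 = q" unfolding s ab by (simp add: field_simps)
    show ?thesis unfolding gfun_def e ..
  qed
qed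

lemma g_concave_sym: assumes "0 \<le> x" "x \<le> 1" "0 \<le> y" "y \<le> 1"
  shows "gfun x + gfun y \<le> 2 * gfun ((x + y) / 2)"
proof (cases "x \<le> y")
  case True then show ?thesis using g_concave assms by simp
next
  case False
  then have "gfun y + gfun x \<le> 2 * gfun ((y + x) / 2)" using g_concave assms by simp
  then show ?thesis by (simp add: add.commute)
qed

lemma sq01: assumes "0 \<le> q" "q \<le> (1::real)" shows "0 \<le> (2*q - 1)^2" "(2*q - 1)^2 \<le> 1"
proof -
  show "0 \<le> (2*q - 1)^2" by simp
  have "\<bar>2*q - 1\<bar> \<le> 1" using assms by simp
  then have "\<bar>2*q - 1\<bar>^2 \<le> 1^2" by (intro power_mono) auto
  then show "(2*q - 1)^2 \<le> 1" by simp
qed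

lemma final_pair:
  fixes H qa qb \<beta> :: real
  assumes H: "H \<le> bin_entropy qa + bin_entropy qb"
    and qa: "0 \<le> qa" "qa \<le> 1" and qb: "0 \<le> qb" "qb \<le> 1"
    and b0: "0 \<le> \<beta>" and bb: "\<beta> \<le> 2 * sqrt ((2*qa - 1)^2 + (2*qb - 1)^2)"
  shows "H \<le> 2 * gfun (\<beta>^2 / 8)"
proof -
  define A B where "A = (2*qa - 1)^2" "B = (2*qb - 1)^2"
  have A: "0 \<le> A" "A \<le> 1" unfolding A_B_def using sq01[OF qa] by auto
  have B: "0 \<le> B" "B \<le> 1" unfolding A_B_def using sq01[OF qb] by auto
  have "H \<le> gfun A + gfun B" using H bin_gfun[OF qa] bin_gfun[OF qb] unfolding A_B_def by simp
  also have "\<dots> \<le> 2 * gfun ((A + B) / 2)" using A B by (intro g_concave_sym) auto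
  also have "gfun ((A + B) / 2) \<le> gfun (\<beta>^2 / 8)"
  proof (rule g_antimono)
    show "0 \<le> \<beta>^2 / 8" by simp
    have "\<beta>^2 \<le> (2 * sqrt (A + B))^2" using bb b0 unfolding A_B_def by (intro power_mono) auto
    also have "\<dots> = 4 * (A + B)" using A B by (simp add: power_mult_distrib)
    finally show "\<beta>^2 / 8 \<le> (A + B) / 2" by simp
    show "(A + B) / 2 \<le> 1" using A B by simp
  qed
  finally show ?thesis by simp
qed

theorem lemma1:
  fixes p1 p2 p3 p4 :: real
    and a0 a1 b0 b1 :: "real \<times> real \<times> real"
  assumes "p1 \<ge> 0" "p2 \<ge> 0" "p3 \<ge> 0" "p4 \<ge> 0" "p1 + p2 + p3 + p4 = 1"
    and "\<And>v. v \<in> {a0, a1, b0, b1} \<Longrightarrow>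
           (fst v)\<^sup>2 + (fst (snd v))\<^sup>2 + (snd (snd v))\<^sup>2 = 1"
    and "\<sigma> = bell_diag p1 p2 p3 p4"
    and "A0 = qubit_obs (fst a0) (fst (snd a0)) (snd (snd a0))"
    and "A1 = qubit_obs (fst a1) (fst (snd a1)) (snd (snd a1))"
    and "B0 = qubit_obs (fst b0) (fst (snd b0)) (snd (snd b0))"
    and "B1 = qubit_obs (fst b1) (fst (snd b1)) (snd (snd b1))"
    and "\<omega> = chsh_omega \<sigma> A0 A1 B0 B1"
    and "3/4 \<le> \<omega>" "\<omega> \<le> (2 + sqrt 2) / 4"
  shows "cond_entropy \<sigma> \<le> 2 * bin_entropy (1/2 - (2 * \<omega> - 1) / sqrt 2) - 1"
proof -
  obtain x1 x2 x3 where xa: "a0 = (x1, x2, x3)" by (cases a0) auto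
  obtain y1 y2 y3 where ya: "a1 = (y1, y2, y3)" by (cases a1) auto
  obtain u1 u2 u3 where ua: "b0 = (u1, u2, u3)" by (cases b0) auto
  obtain v1 v2 v3 where va: "b1 = (v1, v2, v3)" by (cases b1) auto
  have nx: "x1^2 + x2^2 + x3^2 = 1" using assms(6)[of a0] xa by simp
  have ny: "y1^2 + y2^2 + y3^2 = 1" using assms(6)[of a1] ya by simp
  have nu: "u1^2 + u2^2 + u3^2 = 1" using assms(6)[of b0] ua by simp
  have nv: "v1^2 + v2^2 + v3^2 = 1" using assms(6)[of b1] va by simp
  define t1 t2 t3 where "t1 = p1 - p2 + p3 - p4" "t2 = - p1 + p2 + p3 - p4" "t3 = p1 + p2 - p3 - p4"
  define f1 f2 f3 where "f1 = x1*(u1+v1) + y1*(u1-v1)" "f2 = x2*(u2+v2) + y2*(u2-v2)" "f3 = x3*(u3+v3) + y3*(u3-v3)"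
  define \<beta> where "\<beta> = t1 * f1 + t2 * f2 + t3 * f3"
  have om: "\<omega> = 1/2 + \<beta> / 8"
    using chsh_formula[of p1 p2 p3 p4 x1 x2 x3 y1 y2 y3 u1 u2 u3 v1 v2 v3]
    unfolding assms(12) assms(7-11) xa ya ua va t1_t2_t3_def f1_f2_f3_def \<beta>_def by simp
  have b2: "2 \<le> \<beta>" using assms(13) unfolding om by simp
  then have b0: "0 \<le> \<beta>" by simp
  have rhs: "bin_entropy (1/2 - (2 * \<omega> - 1) / sqrt 2) = gfun (\<beta>^2 / 8)"
  proof -
    have s8: "sqrt 8 = 2 * sqrt (2::real)"
      using real_sqrt_mult[of 4 2] by simp
    have "sqrt (\<beta>^2 / 8) = \<beta> / (2 * sqrt 2)"
      using b0 s8 by (simp add: real_sqrt_divide)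
    then have e: "(1 - sqrt (\<beta>^2 / 8)) / 2 = 1/2 - (2 * \<omega> - 1) / sqrt 2"
      unfolding om by (simp add: field_simps)
    show ?thesis unfolding gfun_def e ..
  qed
  have ce: "cond_entropy \<sigma> = ent_term p1 + ent_term p2 + ent_term p3 + ent_term p4 - 1"
    unfolding assms(7) using cond_bell[OF assms(5)] .
  let ?H = "ent_term p1 + ent_term p2 + ent_term p3 + ent_term p4"
  have p4e: "p4 = 1 - p1 - p2 - p3" using assms(5) by simp
  have main: "?H \<le> 2 * gfun (\<beta>^2 / 8)"
  proof (cases "t3^2 \<le> t1^2 \<and> t3^2 \<le> t2^2")
    case True
    have kv: "t1 * f1 + t2 * f2 + t3 * f3 \<le> 2 * sqrt (t1^2 + t2^2)"
      unfolding f1_f2_f3_def by (rule key_vec) (use nx ny nu nv True in auto)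
    have sa: "ent_term p3 + ent_term p1 + ent_term p2 + ent_term p4 \<le> bin_entropy (p3 + p1) + bin_entropy (p3 + p2)"
      using assms(1-5) by (intro subadd) (auto simp: algebra_simps)
    show ?thesis
    proof (rule final_pair[of _ "p3 + p1" "p3 + p2"])
      show "?H \<le> bin_entropy (p3 + p1) + bin_entropy (p3 + p2)" using sa by (simp add: algebra_simps)
      show "0 \<le> p3 + p1" "p3 + p1 \<le> 1" "0 \<le> p3 + p2" "p3 + p2 \<le> 1" using assms(1-5) by auto
      show "0 \<le> \<beta>" by (rule b0)
      have "2 * (p3 + p1) - 1 = t1" "2 * (p3 + p2) - 1 = t2" unfolding t1_t2_t3_def p4e by simp_all
      then show "\<beta> \<le> 2 * sqrt ((2 * (p3 + p1) - 1)^2 + (2 * (p3 + p2) - 1)^2)"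
        using kv unfolding \<beta>_def by simp
    qed
  next
    case False
    show ?thesis
    proof (cases "t1^2 \<le> t2^2 \<and> t1^2 \<le> t3^2")
      case True
      have kv: "t2 * f2 + t3 * f3 + t1 * f1 \<le> 2 * sqrt (t2^2 + t3^2)"
        unfolding f1_f2_f3_def by (rule key_vec) (use nx ny nu nv True in auto)
      have sa: "ent_term p2 + ent_term p1 + ent_term p3 + ent_term p4 \<le> bin_entropy (p2 + p1) + bin_entropy (p2 + p3)"
        using assms(1-5) by (intro subadd) (auto simp: algebra_simps)
      show ?thesis
      proof (rule final_pair[of _ "p2 + p1" "p2 + p3"])
        show "?H \<le> bin_entropy (p2 + p1) + bin_entropy (p2 + p3)" using sa by (simp add: algebra_simps)
        show "0 \<le> p2 + p1" "p2 + p1 \<le> 1" "0 \<le> p2 + p3" "p2 + p3 \<le> 1" using assms(1-5) by auto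
        show "0 \<le> \<beta>" by (rule b0)
        have "2 * (p2 + p1) - 1 = t3" "2 * (p2 + p3) - 1 = t2" unfolding t1_t2_t3_def p4e by simp_all
        moreover have "\<beta> = t2 * f2 + t3 * f3 + t1 * f1" unfolding \<beta>_def by simp
        ultimately show "\<beta> \<le> 2 * sqrt ((2 * (p2 + p1) - 1)^2 + (2 * (p2 + p3) - 1)^2)"
          using kv by (simp add: add.commute)
      qed
    next
      case False2: False
      have t2min: "t2^2 \<le> t1^2 \<and> t2^2 \<le> t3^2" using False False2 by auto
      have kv: "t1 * f1 + t3 * f3 + t2 * f2 \<le> 2 * sqrt (t1^2 + t3^2)"
        unfolding f1_f2_f3_def by (rule key_vec) (use nx ny nu nv t2min in auto)
      have sa: "ent_term p1 + ent_term p2 + ent_term p3 + ent_term p4 \<le> bin_entropy (p1 + p2) + bin_entropy (p1 + p3)"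
        using assms(1-5) by (intro subadd) auto
      show ?thesis
      proof (rule final_pair[of _ "p1 + p3" "p1 + p2"])
        show "?H \<le> bin_entropy (p1 + p3) + bin_entropy (p1 + p2)" using sa by (simp add: algebra_simps)
        show "0 \<le> p1 + p3" "p1 + p3 \<le> 1" "0 \<le> p1 + p2" "p1 + p2 \<le> 1" using assms(1-5) by auto
        show "0 \<le> \<beta>" by (rule b0)
        have "2 * (p1 + p3) - 1 = t1" "2 * (p1 + p2) - 1 = t3" unfolding t1_t2_t3_def p4e by simp_all
        moreover have "\<beta> = t1 * f1 + t3 * f3 + t2 * f2" unfolding \<beta>_def by simp
        ultimately show "\<beta> \<le> 2 * sqrt ((2 * (p1 + p3) - 1)^2 + (2 * (p1 + p2) - 1)^2)"
          using kv by simp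
      qed
    qed
  qed
  show ?thesis unfolding ce rhs using main by simp
qed

end
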